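(* Let $M$ be a magma satisfying $(xy)z = x(yz)$ and $x(yx) = x$ for all $x,y,z\in M$. Then $M$ satisfies $xy = x$ for all $x,y\in M$ if and only if $M$ avoids the $2$-element right zero band $2_{RZ}$ on $\{0,1\}$ with Cayley table \[ \begin{array}{c|cc} 2_{RZ} & 0 & 1 \\ \hline 0 & 0 & 1 \\ 1 & 0 & 1 \end{array}. \]
   Context: A magma is a nonempty set with a binary operation, written by juxtaposition. A magma $M$ avoids a magma $F$ if no submagma of $M$ is isomorphic to $F$. *)

theory Defs
  imports Main
begin

definition magma :: "'a set \<Rightarrow> ('a \<Rightarrow> 'a \<Rightarrow> 'a) \<Rightarrow> bool" where
  "magma M op \<longleftrightarrow> M \<noteq> {} \<and> (\<forall>x\<in>M. \<forall>y\<in>M. op x y \<in> M)"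

definition submagma :: "'a set \<Rightarrow> 'a set \<Rightarrow> ('a \<Rightarrow> 'a \<Rightarrow> 'a) \<Rightarrow> bool" where
  "submagma S M op \<longleftrightarrow> S \<subseteq> M \<and> magma S op"

definition magma_iso ::
  "'a set \<Rightarrow> ('a \<Rightarrow> 'a \<Rightarrow> 'a) \<Rightarrow> 'b set \<Rightarrow> ('b \<Rightarrow> 'b \<Rightarrow> 'b) \<Rightarrow> bool" where
  "magma_iso A opA B opB \<longleftrightarrow>
     (\<exists>h. bij_betw h A B \<and> (\<forall>x\<in>A. \<forall>y\<in>A. h (opA x y) = opB (h x) (h y)))"

definition avoids ::
  "'a set \<Rightarrow> ('a \<Rightarrow> 'a \<Rightarrow> 'a) \<Rightarrow> 'b set \<Rightarrow> ('b \<Rightarrow> 'b \<Rightarrow> 'b) \<Rightarrow> bool" where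
  "avoids M op F opF \<longleftrightarrow> \<not> (\<exists>S. submagma S M op \<and> magma_iso F opF S op)"

definition rz2_carrier :: "nat set" where "rz2_carrier = {0, 1}"
definition rz2_op :: "nat \<Rightarrow> nat \<Rightarrow> nat" where "rz2_op x y = y"

end

theory Submission
  imports Defs
begin

theorem mainTheorem6:
  fixes M :: "'a set" and op :: "'a \<Rightarrow> 'a \<Rightarrow> 'a"
  assumes "magma M op"
    and "\<forall>x\<in>M. \<forall>y\<in>M. \<forall>z\<in>M. op (op x y) z = op x (op y z)"
    and "\<forall>x\<in>M. \<forall>y\<in>M. op x (op y x) = x"
  shows "(\<forall>x\<in>M. \<forall>y\<in>M. op x y = x) \<longleftrightarrow> avoids M op rz2_carrier rz2_op"
proof
  assume L: "\<forall>x\<in>M. \<forall>y\<in>M. op x y = x"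
  show "avoids M op rz2_carrier rz2_op"
    unfolding avoids_def
  proof
    assume "\<exists>S. submagma S M op \<and> magma_iso rz2_carrier rz2_op S op"
    then obtain S h where S: "S \<subseteq> M" and b: "bij_betw h rz2_carrier S"
      and hom: "\<forall>x\<in>rz2_carrier. \<forall>y\<in>rz2_carrier. h (rz2_op x y) = op (h x) (h y)"
      unfolding submagma_def magma_iso_def by blast
    have in0: "h 0 \<in> M" "h 1 \<in> M" using b S unfolding bij_betw_def rz2_carrier_def by auto
    have "h 1 = op (h 0) (h 1)" using hom unfolding rz2_carrier_def rz2_op_def by auto
    also have "\<dots> = h 0" using L in0 by auto
    finally have "h 1 = h 0" .
    moreover have "inj_on h {0,1::nat}" using b unfolding bij_betw_def rz2_carrier_def by auto
    ultimately show False by (auto dest: inj_onD)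
  qed
next
  assume A: "avoids M op rz2_carrier rz2_op"
  show "\<forall>x\<in>M. \<forall>y\<in>M. op x y = x"
  proof (rule ccontr)
    assume "\<not> ?thesis"
    then obtain x y where xy: "x \<in> M" "y \<in> M" "op x y \<noteq> x" by blast
    have cl: "\<And>a b. a \<in> M \<Longrightarrow> b \<in> M \<Longrightarrow> op a b \<in> M" using assms(1) unfolding magma_def by blast
    have idem: "\<And>a. a \<in> M \<Longrightarrow> op a a = a"
    proof -
      fix a assume a: "a \<in> M"
      have "op a (op a a) = a" using assms(3) a by blast
      have "op a a = op (op a (op a a)) a" using \<open>op a (op a a) = a\<close> by simp
      also have "\<dots> = op a (op (op a a) a)" using assms(2) a cl by simp
      also have "\<dots> = a" using assms(3) a cl by simp
      finally show "op a a = a" .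
    qed
    define v where "v = op x y"
    have vM: "v \<in> M" using cl xy v_def by simp
    have xv: "op x v = v" unfolding v_def using assms(2) xy idem
      by (metis)
    have vx: "op v x = x" unfolding v_def using assms(2,3) xy by metis
    have vv: "op v v = v" using idem vM by simp
    have xx: "op x x = x" using idem xy by simp
    define h where "h = (\<lambda>n::nat. if n = 0 then x else v)"
    have "submagma {x, v} M op"
      unfolding submagma_def magma_def using xy vM xv vx vv xx by auto
    moreover have "magma_iso rz2_carrier rz2_op {x, v} op"
      unfolding magma_iso_def
    proof (intro exI conjI)
      show "bij_betw h rz2_carrier {x, v}"
        unfolding bij_betw_def inj_on_def rz2_carrier_def h_def
        using xy(3) v_def by auto
      show "\<forall>a\<in>rz2_carrier. \<forall>b\<in>rz2_carrier. h (rz2_op a b) = op (h a) (h b)"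
        unfolding rz2_carrier_def rz2_op_def h_def using xv vx vv xx by auto
    qed
    ultimately show False using A unfolding avoids_def by blast
  qed
qed

end
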